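(* Fix $n \ge n_0$ where $n_0$ is a sufficiently large universal constant. For $G=(L\cup R,E)$ drawn uniformly from $\mathcal{G}_{2n}$, with probability at least $1 - \frac{1}{n^2}$, we have $|E(B, A)| \ge \frac{1}{4} |B| |A|$ for every $A \subseteq L$ and $B \subseteq R$ satisfying $|A|, |B| \ge \frac{n}{8}$.
   Context: Fix disjoint vertex sets $L,R$ with $|L|=|R|=n$ and a fixed perfect matching $M$ of directed edges from $L$ to $R$. $\mathcal{G}_{2n}$ is the set of all unweighted directed graphs on vertex set $L\cup R$ whose set of edges from $L$ to $R$ is exactly $M$, whose edges from $R$ to $L$ form an arbitrary subset of $R\times L$, and which have no other edges. $E(B,A)$ is the set of edges from $B$ to $A$. *)

theory Defs
  imports "HOL-Probability.Probability"
begin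

definition perfect_matching :: "'a set \<Rightarrow> 'a set \<Rightarrow> ('a \<times> 'a) set \<Rightarrow> bool" where
  "perfect_matching L R M \<longleftrightarrow> M \<subseteq> L \<times> R \<and>
     (\<forall>l\<in>L. \<exists>!r. (l, r) \<in> M) \<and> (\<forall>r\<in>R. \<exists>!l. (l, r) \<in> M)"

definition graph_family :: "'a set \<Rightarrow> 'a set \<Rightarrow> ('a \<times> 'a) set \<Rightarrow> ('a \<times> 'a) set set" where
  "graph_family L R M = {E. E \<subseteq> (L \<times> R) \<union> (R \<times> L) \<and> E \<inter> (L \<times> R) = M}"

definition edges_between :: "('a \<times> 'a) set \<Rightarrow> 'a set \<Rightarrow> 'a set \<Rightarrow> ('a \<times> 'a) set" where
  "edges_between E B A = {(u, v) \<in> E. u \<in> B \<and> v \<in> A}"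

end

theory Submission imports Defs "HOL-Real_Asymp.Real_Asymp" begin

lemma tail:
  assumes S: "finite S" and C: "C \<subseteq> S" and k: "card C = k" "k > 0"
  shows "measure_pmf.prob (pmf_of_set (Pow S)) {T. real (card (T \<inter> C)) \<le> real k / 4} \<le> exp (- real k / 8)"
proof -
  have fC: "finite C" using S C finite_subset by blast
  let ?Pi = "Pi_pmf S False (\<lambda>_. bernoulli_pmf (1/2))"
  let ?PiC = "Pi_pmf C False (\<lambda>_. bernoulli_pmf (1/2))"
  have "measure_pmf.prob (pmf_of_set (Pow S)) {T. real (card (T \<inter> C)) \<le> real k / 4}
      = measure_pmf.prob ?Pi {b. real (card ({x\<in>S. b x} \<inter> C)) \<le> real k / 4}"
    by (subst pmf_of_set_Pow_conv_bernoulli[OF S, symmetric]) (simp add: vimage_def)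
  also have "{b. real (card ({x\<in>S. b x} \<inter> C)) \<le> real k / 4} =
      (\<lambda>f x. if x \<in> C then f x else False) -` {b. real (card {x\<in>C. b x}) \<le> real k / 4}"
  proof -
    have "\<And>b. {x\<in>S. b x} \<inter> C = {x\<in>C. (if x \<in> C then b x else False)}" using C by auto
    then show ?thesis by auto
  qed
  also have "measure_pmf.prob ?Pi \<dots> = measure_pmf.prob ?PiC {b. real (card {x\<in>C. b x}) \<le> real k / 4}"
    by (subst Pi_pmf_subset[OF S C]) simp
  also have "\<dots> = measure_pmf.prob (binomial_pmf k (1/2)) {x. real x \<le> real k / 4}"
    by (subst binomial_pmf_altdef'[OF fC k(1), of "1/2" False]) (auto simp: vimage_def)
  also have "{x. real x \<le> real k / 4} = {x. real x \<le> real k * (1/2) - real k / 4}" by auto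
  also have "measure_pmf.prob (binomial_pmf k (1/2)) \<dots> \<le> exp (-2 * (real k / 4)\<^sup>2 / real k)"
    by (rule binomial_distribution.prob_le) (use k in \<open>auto simp: binomial_distribution_def\<close>)
  also have "-2 * (real k / 4)\<^sup>2 / real k = - real k / 8" using k by (simp add: power2_eq_square)
  finally show ?thesis .
qed

lemma asym: "\<exists>n0::nat. \<forall>n\<ge>n0. 4 ^ n * exp (- (real n)\<^sup>2 / 512) \<le> 1 / (real n)\<^sup>2"
proof -
  have "((\<lambda>x::real. exp (x * ln 4 - x\<^sup>2 / 512) * x\<^sup>2) \<longlongrightarrow> 0) at_top" by real_asymp
  then have "eventually (\<lambda>x::real. exp (x * ln 4 - x\<^sup>2 / 512) * x\<^sup>2 < 1) at_top"
    by (rule order_tendstoD) simp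
  then have "eventually (\<lambda>n::nat. exp (real n * ln 4 - (real n)\<^sup>2 / 512) * (real n)\<^sup>2 < 1 \<and> n \<ge> 1) at_top"
    using filterlim_real_sequentially eventually_ge_at_top[of "1::nat"] unfolding filterlim_iff
    by (auto intro: eventually_conj)
  then obtain n0 where n0: "\<And>n. n \<ge> n0 \<Longrightarrow> exp (real n * ln 4 - (real n)\<^sup>2 / 512) * (real n)\<^sup>2 < 1 \<and> n \<ge> 1"
    unfolding eventually_at_top_linorder by blast
  show ?thesis
  proof (intro exI allI impI)
    fix n :: nat assume "n \<ge> n0"
    from n0[OF this] have h: "exp (real n * ln 4 - (real n)\<^sup>2 / 512) * (real n)\<^sup>2 < 1" and n1: "n \<ge> 1" by auto
    have e: "exp (real n * ln 4 - (real n)\<^sup>2 / 512) = 4 ^ n * exp (- (real n)\<^sup>2 / 512)"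
    proof -
      have "exp (real n * ln 4) = 4 ^ n" by (subst exp_of_nat_mult) simp
      moreover have "exp (real n * ln 4 - (real n)\<^sup>2 / 512) = exp (real n * ln 4) * exp (- (real n)\<^sup>2 / 512)"
        using exp_add[of "real n * ln 4" "- (real n)\<^sup>2 / 512"] by simp
      ultimately show ?thesis by simp
    qed
    have "(4::real) ^ n * exp (- (real n)\<^sup>2 / 512) * (real n)\<^sup>2 \<le> 1" using h e by simp
    then show "4 ^ n * exp (- (real n)\<^sup>2 / 512) \<le> 1 / (real n)\<^sup>2" using n1 by (simp add: field_simps)
  qed
qed

theorem lemma9:
  "\<exists>n0::nat. \<forall>n \<ge> n0. \<forall>(L::'a set) R M.
     finite L \<and> finite R \<and> L \<inter> R = {} \<and> card L = n \<and> card R = n \<and> perfect_matching L R M \<longrightarrow>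
     measure_pmf.prob (pmf_of_set (graph_family L R M))
       {E. \<forall>A B. A \<subseteq> L \<and> B \<subseteq> R \<and> real (card A) \<ge> real n / 8 \<and> real (card B) \<ge> real n / 8 \<longrightarrow>
              real (card (edges_between E B A)) \<ge> 1/4 * real (card B) * real (card A)}
     \<ge> 1 - 1 / (real n)^2"
proof -
  obtain n0 :: nat where n0: "\<And>n. n \<ge> n0 \<Longrightarrow> 4 ^ n * exp (- (real n)\<^sup>2 / 512) \<le> 1 / (real n)\<^sup>2"
    using asym by blast
  show ?thesis
  proof (intro exI[of _ "max n0 1"] allI impI)
    fix n :: nat and L R :: "'a set" and M
    assume nge: "max n0 1 \<le> n"
    assume H: "finite L \<and> finite R \<and> L \<inter> R = {} \<and> card L = n \<and> card R = n \<and> perfect_matching L R M"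
    then have fL: "finite L" and fR: "finite R" and disj: "L \<inter> R = {}" and cL: "card L = n"
      and cR: "card R = n" and pm: "perfect_matching L R M" by auto
    have n1: "n \<ge> 1" using nge by auto
    have MLR: "M \<subseteq> L \<times> R" using pm unfolding perfect_matching_def by auto
    define S where "S = R \<times> L"
    have fS: "finite S" using fL fR unfolding S_def by auto
    have MS: "M \<inter> S = {}" using MLR disj unfolding S_def by auto
    have F_eq: "graph_family L R M = (\<lambda>T. M \<union> T) ` Pow S"
    proof
      show "graph_family L R M \<subseteq> (\<lambda>T. M \<union> T) ` Pow S"
      proof
        fix E assume "E \<in> graph_family L R M"
        then have E1: "E \<subseteq> (L \<times> R) \<union> (R \<times> L)" and E2: "E \<inter> (L \<times> R) = M"
          unfolding graph_family_def by auto
        have "E = M \<union> (E \<inter> S)" using E1 E2 unfolding S_def by blast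
        moreover have "E \<inter> S \<in> Pow S" by auto
        ultimately show "E \<in> (\<lambda>T. M \<union> T) ` Pow S" by blast
      qed
    next
      show "(\<lambda>T. M \<union> T) ` Pow S \<subseteq> graph_family L R M"
      proof
        fix E assume "E \<in> (\<lambda>T. M \<union> T) ` Pow S"
        then obtain T where T: "T \<subseteq> S" and E: "E = M \<union> T" by auto
        have "T \<inter> (L \<times> R) = {}" using T disj unfolding S_def by blast
        then show "E \<in> graph_family L R M"
          using T MLR E unfolding graph_family_def S_def by blast
      qed
    qed
    have inj: "inj_on (\<lambda>T. M \<union> T) (Pow S)"
    proof (rule inj_onI)
      fix T1 T2 assume "T1 \<in> Pow S" "T2 \<in> Pow S" "M \<union> T1 = M \<union> T2"
      then show "T1 = T2" using MS by blast
    qed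
    have pmf_eq: "pmf_of_set (graph_family L R M) = map_pmf (\<lambda>T. M \<union> T) (pmf_of_set (Pow S))"
      using map_pmf_of_set_inj[OF inj] fS F_eq by (simp add: Pow_not_empty)
    define good where "good = {E. \<forall>A B. A \<subseteq> L \<and> B \<subseteq> R \<and> real (card A) \<ge> real n / 8 \<and> real (card B) \<ge> real n / 8 \<longrightarrow>
              real (card (edges_between E B A)) \<ge> 1/4 * real (card B) * real (card A)}"
    define P where "P = {(A,B). A \<subseteq> L \<and> B \<subseteq> R \<and> real (card A) \<ge> real n / 8 \<and> real (card B) \<ge> real n / 8}"
    define Q :: "'a set \<times> 'a set \<Rightarrow> ('a \<times> 'a) set set" where "Q = (\<lambda>(A,B). {T. real (card (T \<inter> (B \<times> A))) \<le> real (card (B \<times> A)) / 4})"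
    have PP: "P \<subseteq> Pow L \<times> Pow R" unfolding P_def by auto
    have fP: "finite P" using finite_subset[OF PP] fL fR by auto
    have cP: "card P \<le> 4 ^ n"
    proof -
      have "card P \<le> card (Pow L \<times> Pow R)" using card_mono[OF _ PP] fL fR by auto
      also have "\<dots> = 2 ^ n * 2 ^ n" using fL fR cL cR by (simp add: card_cartesian_product card_Pow)
      also have "\<dots> = (2 * 2) ^ n" by (rule power_mult_distrib[symmetric])
      also have "\<dots> = 4 ^ n" by simp
      finally show ?thesis .
    qed
    have sub: "(\<lambda>T. M \<union> T) -` (- good) \<subseteq> \<Union> (Q ` P)"
    proof
      fix T assume "T \<in> (\<lambda>T. M \<union> T) -` (- good)"
      then obtain A B where AB: "A \<subseteq> L" "B \<subseteq> R" "real (card A) \<ge> real n / 8" "real (card B) \<ge> real n / 8"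
        and lt: "real (card (edges_between (M \<union> T) B A)) < 1/4 * real (card B) * real (card A)"
        unfolding good_def by (auto simp: not_le)
      have fBA: "finite (B \<times> A)" using AB fL fR finite_subset by blast
      have "T \<inter> (B \<times> A) \<subseteq> edges_between (M \<union> T) B A" unfolding edges_between_def by auto
      moreover have "edges_between (M \<union> T) B A \<subseteq> B \<times> A" unfolding edges_between_def by auto
      ultimately have "card (T \<inter> (B \<times> A)) \<le> card (edges_between (M \<union> T) B A)"
        using fBA by (meson card_mono finite_subset)
      moreover have "card (B \<times> A) = card B * card A" by (simp add: card_cartesian_product)
      ultimately have "T \<in> Q (A,B)" using lt unfolding Q_def by auto
      moreover have "(A,B) \<in> P" using AB unfolding P_def by auto
      ultimately show "T \<in> \<Union> (Q ` P)" by blast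
    qed
    have each: "measure_pmf.prob (pmf_of_set (Pow S)) (Q p) \<le> exp (- (real n)\<^sup>2 / 512)" if p: "p \<in> P" for p
    proof -
      obtain A B where pAB: "p = (A,B)" by (cases p)
      then have AB: "A \<subseteq> L" "B \<subseteq> R" "real (card A) \<ge> real n / 8" "real (card B) \<ge> real n / 8"
        using p unfolding P_def by auto
      have CS: "B \<times> A \<subseteq> S" using AB unfolding S_def by auto
      have ck: "card (B \<times> A) = card B * card A" by (simp add: card_cartesian_product)
      have pos: "real n / 8 > 0" using n1 by simp
      have kge: "real (card (B \<times> A)) \<ge> (real n / 8) * (real n / 8)"
        unfolding ck of_nat_mult using AB(3,4) pos by (intro mult_mono) auto
      have "(real n / 8) * (real n / 8) > 0" using pos by simp
      then have "real (card (B \<times> A)) > 0" using kge by linarith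
      then have kpos: "card (B \<times> A) > 0" by simp
      have "measure_pmf.prob (pmf_of_set (Pow S)) (Q p) \<le> exp (- real (card (B \<times> A)) / 8)"
        unfolding pAB Q_def using tail[OF fS CS refl kpos] by simp
      also have "\<dots> \<le> exp (- (real n)\<^sup>2 / 512)"
        using kge by (simp add: power2_eq_square)
      finally show ?thesis .
    qed
    have "measure_pmf.prob (pmf_of_set (graph_family L R M)) (- good)
        = measure_pmf.prob (pmf_of_set (Pow S)) ((\<lambda>T. M \<union> T) -` (- good))"
      unfolding pmf_eq by simp
    also have "\<dots> \<le> measure_pmf.prob (pmf_of_set (Pow S)) (\<Union> (Q ` P))"
      by (rule measure_pmf.finite_measure_mono[OF sub]) simp
    also have "\<dots> \<le> (\<Sum>p\<in>P. measure_pmf.prob (pmf_of_set (Pow S)) (Q p))"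
      by (rule measure_pmf.finite_measure_subadditive_finite[OF fP]) auto
    also have "\<dots> \<le> (\<Sum>p\<in>P. exp (- (real n)\<^sup>2 / 512))"
      by (rule sum_mono) (rule each)
    also have "\<dots> = real (card P) * exp (- (real n)\<^sup>2 / 512)" by simp
    also have "\<dots> \<le> 4 ^ n * exp (- (real n)\<^sup>2 / 512)"
    proof -
      have "real (card P) \<le> 4 ^ n" using cP by (metis of_nat_le_iff of_nat_numeral of_nat_power)
      then show ?thesis by (intro mult_right_mono) auto
    qed
    also have "\<dots> \<le> 1 / (real n)\<^sup>2" using n0 nge by auto
    finally have bad: "measure_pmf.prob (pmf_of_set (graph_family L R M)) (- good) \<le> 1 / (real n)\<^sup>2" .
    have "measure_pmf.prob (pmf_of_set (graph_family L R M)) (- good) =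
          1 - measure_pmf.prob (pmf_of_set (graph_family L R M)) good"
      using measure_pmf.prob_compl[of good "pmf_of_set (graph_family L R M)"] by (simp add: Compl_eq_Diff_UNIV)
    then show "measure_pmf.prob (pmf_of_set (graph_family L R M)) good \<ge> 1 - 1 / (real n)\<^sup>2"
      using bad by simp
  qed
qed

end
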